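(* Reduction Rule 3 is safe: if \((G',k')\) is obtained from an instance \((G,k)\) of Vertex Cover by applying Reduction Rule 3, then \(k'+MM(G')-2LP(G')\leq k+MM(G)-2LP(G)\).
   Context: All graphs are finite, undirected and simple. An instance of Vertex Cover is a pair \((G,k)\), \(k\in\mathbb{N}\). \(MM(G)\) is the size of a maximum matching. \(LPVC(G)\) is the LP: minimize \(\sum_v x_v\) subject to \(x_u+x_v\ge1\) for each edge \(\{u,v\}\) and \(0\le x_v\le1\); \(LP(G)\) is its optimum value. For \(X\subseteq V(G)\), \(N(X)\) is the set of vertices outside \(X\) adjacent to some vertex of \(X\); for an independent set \(Z\), \(\mathrm{surplus}(Z)=|N(Z)|-|Z|\). Reduction Rule 3 applies to \((G,k)\) when (i) the all-\(\frac12\) assignment is the unique optimum solution of \(LPVC(G)\), (ii) there is no independent set \(Z\) with \(\mathrm{surplus}(Z)=1\) and \(N(Z)\) non-independent, and (iii) there is an independent set \(Z\subseteq V(G)\) with \(\mathrm{surplus}(Z)=1\) such that \(N(Z)\) is an independent set in \(G\). It then removes \(Z\) and identifies the vertices of \(N(Z)\): \(G'\) is obtained from \(G\) by deleting \(Z\cup N(Z)\), adding a new vertex \(z\), and making \(z\) adjacent to every vertex of \(N(N(Z))\setminus Z\); and \(k'=k-|Z|\). *)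

theory Defs
  imports Complex_Main
begin

definition graph :: "'a set \<Rightarrow> 'a set set \<Rightarrow> bool" where
  "graph V E \<longleftrightarrow> finite V \<and> (\<forall>e\<in>E. \<exists>u v. e = {u, v} \<and> u \<noteq> v \<and> u \<in> V \<and> v \<in> V)"

definition independent :: "'a set set \<Rightarrow> 'a set \<Rightarrow> bool" where
  "independent E X \<longleftrightarrow> (\<forall>u\<in>X. \<forall>v\<in>X. {u, v} \<notin> E)"

definition nbh :: "'a set \<Rightarrow> 'a set set \<Rightarrow> 'a set \<Rightarrow> 'a set" where
  "nbh V E X = {v \<in> V - X. \<exists>u\<in>X. {u, v} \<in> E}"

definition surplus :: "'a set \<Rightarrow> 'a set set \<Rightarrow> 'a set \<Rightarrow> int" where
  "surplus V E Z = int (card (nbh V E Z)) - int (card Z)"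

definition matching :: "'a set set \<Rightarrow> 'a set set \<Rightarrow> bool" where
  "matching E M \<longleftrightarrow> M \<subseteq> E \<and> (\<forall>e1\<in>M. \<forall>e2\<in>M. e1 \<noteq> e2 \<longrightarrow> e1 \<inter> e2 = {})"

definition MM :: "'a set set \<Rightarrow> nat" where
  "MM E = Max (card ` {M. matching E M})"

definition lpvc_feasible :: "'a set \<Rightarrow> 'a set set \<Rightarrow> ('a \<Rightarrow> real) \<Rightarrow> bool" where
  "lpvc_feasible V E x \<longleftrightarrow>
     (\<forall>u v. {u, v} \<in> E \<longrightarrow> x u + x v \<ge> 1) \<and> (\<forall>v\<in>V. 0 \<le> x v \<and> x v \<le> 1)"

definition LP :: "'a set \<Rightarrow> 'a set set \<Rightarrow> real" where
  "LP V E = Inf {(\<Sum>v\<in>V. x v) | x. lpvc_feasible V E x}"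

definition lpvc_optimal :: "'a set \<Rightarrow> 'a set set \<Rightarrow> ('a \<Rightarrow> real) \<Rightarrow> bool" where
  "lpvc_optimal V E x \<longleftrightarrow> lpvc_feasible V E x \<and> (\<Sum>v\<in>V. x v) = LP V E"

definition half_unique_optimum :: "'a set \<Rightarrow> 'a set set \<Rightarrow> bool" where
  "half_unique_optimum V E \<longleftrightarrow> lpvc_optimal V E (\<lambda>_. 1/2) \<and>
     (\<forall>x. lpvc_optimal V E x \<longrightarrow> (\<forall>v\<in>V. x v = 1/2))"

definition rr3_vertices :: "'a set \<Rightarrow> 'a set set \<Rightarrow> 'a set \<Rightarrow> 'a \<Rightarrow> 'a set" where
  "rr3_vertices V E Z z = (V - (Z \<union> nbh V E Z)) \<union> {z}"

definition rr3_edges :: "'a set \<Rightarrow> 'a set set \<Rightarrow> 'a set \<Rightarrow> 'a \<Rightarrow> 'a set set" where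
  "rr3_edges V E Z z = {e \<in> E. e \<inter> (Z \<union> nbh V E Z) = {}}
      \<union> {{z, w} | w. w \<in> nbh V E (nbh V E Z) - Z}"

end

theory Submission
  imports Defs
begin

lemma hall:
  fixes A :: "'a set" and N :: "'a \<Rightarrow> 'b set"
  assumes "finite A" "\<forall>a\<in>A. finite (N a)" "\<forall>S\<subseteq>A. card S \<le> card (\<Union>(N ` S))"
  shows "\<exists>f. inj_on f A \<and> (\<forall>a\<in>A. f a \<in> N a)"
  using assms
proof (induction "card A" arbitrary: A N rule: less_induct)
  case less
  show ?case
  proof (cases "A = {}")
    case True then show ?thesis by auto
  next
    case False
    show ?thesis
    proof (cases "\<exists>S. S \<subseteq> A \<and> S \<noteq> {} \<and> S \<noteq> A \<and> card (\<Union>(N`S)) = card S")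
      case True
      then obtain S where S: "S \<subseteq> A" "S \<noteq> {}" "S \<noteq> A" "card (\<Union>(N`S)) = card S" by blast
      have fS: "finite S" using S less.prems finite_subset by blast
      have "card S < card A" using S less.prems psubset_card_mono by blast
      moreover have "\<forall>T\<subseteq>S. card T \<le> card (\<Union>(N ` T))" using S less.prems by auto
      ultimately obtain f1 where f1: "inj_on f1 S" "\<forall>a\<in>S. f1 a \<in> N a"
        using less.hyps[of S N] S less.prems fS by blast
      define U where "U = \<Union>(N`S)"
      define N2 where "N2 = (\<lambda>a. N a - U)"
      have c2: "card (A - S) < card A" using S less.prems
        by (metis Diff_empty Diff_subset card_seteq diff_shunt finite_Diff less.prems(1) not_less psubset_card_mono subset_Diff_insert double_diff psubsetI Diff_cancel)
      have hall2: "\<forall>T\<subseteq>A-S. card T \<le> card (\<Union>(N2`T))"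
      proof (intro allI impI)
        fix T assume T: "T \<subseteq> A - S"
        have fT: "finite T" using T less.prems finite_subset by blast
        have fin2: "finite (\<Union>(N2`T))" using T less.prems fT unfolding N2_def by auto
        have finU: "finite U" using S less.prems fS unfolding U_def by auto
        have "card T + card S = card (T \<union> S)" using T fT fS by (simp add: card_Un_disjoint disjoint_iff subset_iff)
        also have "\<dots> \<le> card (\<Union>(N`(T\<union>S)))" using T S by (intro less.prems(3)[rule_format]) auto
        also have "\<dots> \<le> card (\<Union>(N2`T) \<union> U)"
          by (rule card_mono) (use fin2 finU in \<open>auto simp: N2_def U_def\<close>)
        also have "\<dots> \<le> card (\<Union>(N2`T)) + card U" by (rule card_Un_le)
        finally show "card T \<le> card (\<Union>(N2`T))" using S(4) U_def by simp
      qed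
      obtain f2 where f2: "inj_on f2 (A - S)" "\<forall>a\<in>A-S. f2 a \<in> N2 a"
        using less.hyps[OF c2, of N2] hall2 less.prems unfolding N2_def by auto
      define f where "f = (\<lambda>a. if a\<in>S then f1 a else f2 a)"
      have "inj_on f A"
        unfolding inj_on_def
      proof (intro ballI impI)
        fix x y assume xy: "x \<in> A" "y \<in> A" "f x = f y"
        show "x = y"
        proof (cases "x \<in> S"; cases "y \<in> S")
          assume "x \<in> S" "y \<in> S" then show ?thesis using xy f1 unfolding f_def inj_on_def by auto
        next
          assume "x \<in> S" "y \<notin> S" then show ?thesis using xy f1 f2 unfolding f_def N2_def U_def by force
        next
          assume h: "x \<notin> S" "y \<in> S"
          then have "f2 x \<notin> U" "f1 y \<in> U" using xy f1 f2 unfolding N2_def U_def by auto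
          then show ?thesis using xy h unfolding f_def by auto
        next
          assume "x \<notin> S" "y \<notin> S" then show ?thesis using xy f2 unfolding f_def inj_on_def by auto
        qed
      qed
      moreover have "\<forall>a\<in>A. f a \<in> N a" using f1 f2 unfolding f_def N2_def by auto
      ultimately show ?thesis by blast
    next
      case False2: False
      obtain a where a: "a \<in> A" using False by blast
      have "card {a} \<le> card (N a)" using less.prems(3) a by (metis empty_subsetI insert_subset image_insert image_empty cSup_singleton Union_insert Union_empty Un_empty_right)
      then have "N a \<noteq> {}" by auto
      then obtain b where b: "b \<in> N a" by blast
      define N2 where "N2 = (\<lambda>x. N x - {b})"
      have c2: "card (A - {a}) < card A" using a less.prems(1) by (meson card_Diff1_less)
      have hall2: "\<forall>T\<subseteq>A-{a}. card T \<le> card (\<Union>(N2`T))"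
      proof (intro allI impI)
        fix T assume T: "T \<subseteq> A - {a}"
        show "card T \<le> card (\<Union>(N2`T))"
        proof (cases "T = {}")
          case True then show ?thesis by simp
        next
          case False
          have fT: "finite T" using T less.prems finite_subset by blast
          have fin: "finite (\<Union>(N`T))" using T less.prems fT by auto
          have "T \<noteq> A" using T a by auto
          then have "card T < card (\<Union>(N`T))" using False2 False T less.prems(3)
            by (metis Diff_subset le_neq_implies_less subset_trans)
          moreover have "\<Union>(N2`T) = \<Union>(N`T) - {b}" unfolding N2_def by auto
          moreover have "card (\<Union>(N`T)) \<le> card (\<Union>(N`T) - {b}) + 1" using fin
            by (cases "b \<in> \<Union>(N`T)") (auto simp: card_Diff_singleton)
          ultimately show ?thesis by simp
        qed
      qed
      obtain f2 where f2: "inj_on f2 (A - {a})" "\<forall>x\<in>A-{a}. f2 x \<in> N2 x"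
        using less.hyps[OF c2, of N2] hall2 less.prems unfolding N2_def by auto
      define f where "f = f2(a := b)"
      have "inj_on f A" using f2 b a unfolding f_def inj_on_def N2_def by (smt (verit) DiffE DiffI fun_upd_apply singletonD singletonI)
      moreover have "\<forall>x\<in>A. f x \<in> N x" using f2 b unfolding f_def N2_def by auto
      ultimately show ?thesis by blast
    qed
  qed
qed



lemma graph_edge:
  assumes "graph V E" "{u, v} \<in> E"
  shows "u \<in> V \<and> v \<in> V \<and> u \<noteq> v"
  using assms unfolding graph_def by (metis doubleton_eq_iff)

lemma graph_EV:
  assumes g: "graph V E" and e: "e \<in> E"
  shows "e \<subseteq> V"
proof -
  have "\<exists>u v. e = {u, v} \<and> u \<noteq> v \<and> u \<in> V \<and> v \<in> V" using g e unfolding graph_def by simp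
  then obtain u v where "e = {u, v}" "u \<in> V" "v \<in> V" by blast
  then show "e \<subseteq> V" by simp
qed

lemma graph_finE: assumes "graph V E" shows "finite E"
proof -
  have "E \<subseteq> Pow V" using graph_EV[OF assms] by blast
  moreover have "finite V" using assms unfolding graph_def by auto
  ultimately show ?thesis by (meson finite_Pow_iff finite_subset)
qed

lemma LP_lower:
  assumes "lpvc_feasible V E x"
  shows "LP V E \<le> (\<Sum>v\<in>V. x v)"
  unfolding LP_def
proof (rule cInf_lower)
  show "(\<Sum>v\<in>V. x v) \<in> {\<Sum>v\<in>V. x v |x. lpvc_feasible V E x}" using assms by blast
  show "bdd_below {\<Sum>v\<in>V. x v |x. lpvc_feasible V E x}"
    unfolding bdd_below_def lpvc_feasible_def by (rule exI[of _ 0]) (auto intro: sum_nonneg)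
qed

lemma LP_half:
  assumes "half_unique_optimum V E"
  shows "LP V E = real (card V) / 2"
  using assms unfolding half_unique_optimum_def lpvc_optimal_def by simp

lemma surplus_pos:
  assumes g: "graph V E" and h: "half_unique_optimum V E" and Y: "Y \<subseteq> V" "independent E Y" "Y \<noteq> {}"
  shows "card Y < card (nbh V E Y)"
proof (rule ccontr)
  assume c: "\<not> card Y < card (nbh V E Y)"
  define NY where "NY = nbh V E Y"
  define x where "x = (\<lambda>v. if v \<in> Y then 0 else if v \<in> NY then 1 else (1/2::real))"
  have fV: "finite V" using g unfolding graph_def by auto
  have NYV: "NY \<subseteq> V" "Y \<inter> NY = {}" unfolding NY_def nbh_def by auto
  have feas: "lpvc_feasible V E x"
    unfolding lpvc_feasible_def
  proof (intro conjI allI impI ballI)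
    fix u v assume e: "{u, v} \<in> E"
    have uv: "u \<in> V" "v \<in> V" "u \<noteq> v" using graph_edge[OF g e] by auto
    have e': "{v, u} \<in> E" using e by (simp add: insert_commute)
    show "1 \<le> x u + x v"
    proof (cases "u \<in> Y")
      case True
      then have "v \<notin> Y" using Y(2) e unfolding independent_def by auto
      moreover have "v \<in> NY" using True uv e \<open>v \<notin> Y\<close> unfolding NY_def nbh_def by auto
      ultimately show ?thesis using True unfolding x_def by simp
    next
      case False
      show ?thesis
      proof (cases "v \<in> Y")
        case True
        then have "u \<in> NY" using False uv e' unfolding NY_def nbh_def by auto
        then show ?thesis using True False unfolding x_def by simp
      qed (use False in \<open>auto simp: x_def\<close>)
    qed
  next
    fix v show "0 \<le> x v" "x v \<le> 1" unfolding x_def by auto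
  qed
  have pt: "\<And>v. x v = 1/2 - (if v \<in> Y then 1/2 else 0) + (if v \<in> NY then 1/2 else 0)"
    using NYV unfolding x_def by auto
  have s1: "(\<Sum>v\<in>V. (if v \<in> Y then (1/2::real) else 0)) = real (card Y) / 2"
    using Y(1) fV by (simp add: sum.If_cases Int_absorb1)
  have s2: "(\<Sum>v\<in>V. (if v \<in> NY then (1/2::real) else 0)) = real (card NY) / 2"
    using NYV fV by (simp add: sum.If_cases Int_absorb1)
  have "(\<Sum>v\<in>V. x v) = real (card V) / 2 - real (card Y) / 2 + real (card NY) / 2"
    unfolding pt using s1 s2 by (simp add: sum.distrib sum_subtractf)
  also have "\<dots> \<le> LP V E" using c LP_half[OF h] unfolding NY_def by simp
  finally have "(\<Sum>v\<in>V. x v) = LP V E" using LP_lower[OF feas] by linarith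
  then have "lpvc_optimal V E x" using feas unfolding lpvc_optimal_def by simp
  then have "\<forall>v\<in>V. x v = 1/2" using h unfolding half_unique_optimum_def by blast
  moreover obtain y where "y \<in> Y" using Y(3) by blast
  ultimately have "x y = 1/2" using Y(1) by blast
  moreover have "x y = 0" using \<open>y \<in> Y\<close> unfolding x_def by simp
  ultimately
  show False by simp
qed

lemma MM_ge:
  assumes "finite E" "matching E M"
  shows "card M \<le> MM E"
proof -
  have "{M. matching E M} \<subseteq> Pow E" unfolding matching_def by auto
  then have "finite {M. matching E M}" using assms(1) by (meson finite_Pow_iff finite_subset)
  then show ?thesis unfolding MM_def using assms(2) by (intro Max_ge) auto
qed

lemma MM_ex:
  assumes "finite E"
  shows "\<exists>M. matching E M \<and> card M = MM E"
proof -
  have "{M. matching E M} \<subseteq> Pow E" unfolding matching_def by auto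
  then have "finite {M. matching E M}" using assms(1) by (meson finite_Pow_iff finite_subset)
  moreover have "matching E {}" unfolding matching_def by auto
  ultimately have "MM E \<in> card ` {M. matching E M}" unfolding MM_def
    by (intro Max_in) auto
  then show ?thesis by auto
qed


lemma match_ext:
  assumes M0: "matching E M0" "finite M0" "\<forall>e\<in>M0. e \<inter> (Z \<union> (NZ - {n0})) = {}"
    and Z: "finite Z" "Z \<inter> NZ = {}"
    and f: "inj_on f Z" "\<forall>a\<in>Z. f a \<in> NZ - {n0} \<and> {a, f a} \<in> E"
  shows "matching E (M0 \<union> (\<lambda>a. {a, f a}) ` Z) \<and> card (M0 \<union> (\<lambda>a. {a, f a}) ` Z) = card M0 + card Z"
proof -
  define F where "F = (\<lambda>a. {a, f a}) ` Z"
  have inj: "inj_on (\<lambda>a. {a, f a}) Z"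
  proof (rule inj_onI)
    fix a b assume ab: "a \<in> Z" "b \<in> Z" "{a, f a} = {b, f b}"
    then have "a \<in> {b, f b}" by auto
    moreover have "a \<noteq> f b" using ab f Z by auto
    ultimately show "a = b" by auto
  qed
  have cF: "card F = card Z" unfolding F_def using inj by (simp add: card_image)
  have disj: "M0 \<inter> F = {}" using M0(3) unfolding F_def by auto
  have fF: "finite F" unfolding F_def using Z by auto
  have c: "card (M0 \<union> F) = card M0 + card Z" using disj fF M0(2) cF by (simp add: card_Un_disjoint)
  have m: "matching E (M0 \<union> F)"
    unfolding matching_def
  proof (intro conjI ballI impI)
    show "M0 \<union> F \<subseteq> E" using M0(1) f unfolding matching_def F_def by auto
  next
    fix e1 e2 assume e: "e1 \<in> M0 \<union> F" "e2 \<in> M0 \<union> F" "e1 \<noteq> e2"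
    show "e1 \<inter> e2 = {}"
    proof (cases "e1 \<in> M0")
      case True
      show ?thesis
      proof (cases "e2 \<in> M0")
        case True
        then show ?thesis using \<open>e1 \<in> M0\<close> e M0(1) unfolding matching_def by auto
      next
        case False
        then obtain b where b: "b \<in> Z" "e2 = {b, f b}" using e unfolding F_def by auto
        have "e1 \<inter> (Z \<union> (NZ - {n0})) = {}" using M0(3) True by blast
        moreover have "b \<in> Z" "f b \<in> NZ - {n0}" using b f by auto
        ultimately show ?thesis using b by blast
      qed
    next
      case False
      then obtain a where a: "a \<in> Z" "e1 = {a, f a}" using e unfolding F_def by auto
      show ?thesis
      proof (cases "e2 \<in> M0")
        case True
        have "e2 \<inter> (Z \<union> (NZ - {n0})) = {}" using M0(3) True by blast
        moreover have "a \<in> Z" "f a \<in> NZ - {n0}" using a f by auto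
        ultimately show ?thesis using a by blast
      next
        case False
        then obtain b where b: "b \<in> Z" "e2 = {b, f b}" using e unfolding F_def by auto
        have ab: "a \<noteq> b" using a b e by blast
        have fab: "f a \<noteq> f b" using ab f(1) a b unfolding inj_on_def by blast
        have fa: "f a \<in> NZ" "f b \<in> NZ" using a b f by auto
        have "a \<noteq> f b" "f a \<noteq> b" using a(1) b(1) fa Z(2) by blast+
        then show ?thesis using a(2) b(2) ab fab by blast
      qed
    qed
  qed
  show ?thesis using m c unfolding F_def by simp
qed


lemma LP'_lower:
  assumes g: "graph V E" and h: "half_unique_optimum V E"
    and Z: "Z \<subseteq> V" "independent E Z" "independent E (nbh V E Z)" "card (nbh V E Z) = card Z + 1"
    and z: "z \<notin> V"
  shows "real (card V) / 2 - real (card Z) \<le> LP (rr3_vertices V E Z z) (rr3_edges V E Z z)"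
  unfolding LP_def
proof (rule cInf_greatest)
  define V' where "V' = rr3_vertices V E Z z"
  define E' where "E' = rr3_edges V E Z z"
  have "lpvc_feasible V' E' (\<lambda>_. 1)" unfolding lpvc_feasible_def by auto
  then show "{\<Sum>v\<in>rr3_vertices V E Z z. x v |x. lpvc_feasible (rr3_vertices V E Z z) (rr3_edges V E Z z) x} \<noteq> {}"
    unfolding V'_def E'_def by blast
next
  fix s assume "s \<in> {\<Sum>v\<in>rr3_vertices V E Z z. x v |x. lpvc_feasible (rr3_vertices V E Z z) (rr3_edges V E Z z) x}"
  then obtain x' where s: "s = (\<Sum>v\<in>rr3_vertices V E Z z. x' v)"
    and fx: "lpvc_feasible (rr3_vertices V E Z z) (rr3_edges V E Z z) x'" by blast
  define NZ where "NZ = nbh V E Z"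
  define Rest where "Rest = V - (Z \<union> NZ)"
  have fV: "finite V" using g unfolding graph_def by auto
  have NZV: "NZ \<subseteq> V" "Z \<inter> NZ = {}" unfolding NZ_def nbh_def by auto
  have V'eq: "rr3_vertices V E Z z = insert z Rest" unfolding rr3_vertices_def Rest_def NZ_def by auto
  have zR: "z \<notin> Rest" using z unfolding Rest_def by auto
  have fR: "finite Rest" using fV unfolding Rest_def by auto
  have bnd: "\<forall>v\<in>insert z Rest. 0 \<le> x' v \<and> x' v \<le> 1" using fx unfolding lpvc_feasible_def V'eq by blast
  have x'z: "0 \<le> x' z" "x' z \<le> 1" using bnd by auto
  have x'R: "\<And>v. v \<in> Rest \<Longrightarrow> 0 \<le> x' v \<and> x' v \<le> 1" using bnd by auto
  have E'1: "\<And>u v. {u, v} \<in> E \<Longrightarrow> u \<in> Rest \<Longrightarrow> v \<in> Rest \<Longrightarrow> 1 \<le> x' u + x' v"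
  proof -
    fix u v assume "{u, v} \<in> E" "u \<in> Rest" "v \<in> Rest"
    then have "{u, v} \<in> rr3_edges V E Z z" unfolding rr3_edges_def Rest_def NZ_def by (intro UnI1) blast
    then show "1 \<le> x' u + x' v" using fx unfolding lpvc_feasible_def by blast
  qed
  have E'2: "\<And>u v. {u, v} \<in> E \<Longrightarrow> u \<in> NZ \<Longrightarrow> v \<in> Rest \<Longrightarrow> 1 \<le> x' z + x' v"
  proof -
    fix u v assume a: "{u, v} \<in> E" "u \<in> NZ" "v \<in> Rest"
    then have "v \<in> nbh V E (nbh V E Z) - Z" unfolding Rest_def NZ_def nbh_def by auto
    then have "{z, v} \<in> rr3_edges V E Z z" unfolding rr3_edges_def by (intro UnI2) blast
    then show "1 \<le> x' z + x' v" using fx unfolding lpvc_feasible_def by blast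
  qed
  define x where "x = (\<lambda>v. if v \<in> Z then 1 - x' z else if v \<in> NZ then x' z else x' v)"
  have edge: "\<And>u v. {u, v} \<in> E \<Longrightarrow> u \<in> Z \<Longrightarrow> v \<in> NZ"
  proof -
    fix u v assume a: "{u, v} \<in> E" "u \<in> Z"
    have "v \<notin> Z" using a Z(2) unfolding independent_def by auto
    moreover have "v \<in> V" using graph_edge[OF g a(1)] by auto
    ultimately show "v \<in> NZ" using a unfolding NZ_def nbh_def by auto
  qed
  have key: "\<And>u v. {u, v} \<in> E \<Longrightarrow> (u \<in> Z \<or> u \<in> NZ) \<Longrightarrow> 1 \<le> x u + x v"
  proof -
    fix u v assume a: "{u, v} \<in> E" "u \<in> Z \<or> u \<in> NZ"
    have a': "{v, u} \<in> E" using a(1) by (simp add: insert_commute)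
    have vV: "v \<in> V" using graph_edge[OF g a(1)] by auto
    show "1 \<le> x u + x v"
    proof (cases "u \<in> Z")
      case True
      then have "v \<in> NZ" using edge a by blast
      then show ?thesis using True NZV unfolding x_def by auto
    next
      case False
      then have uN: "u \<in> NZ" using a by auto
      show ?thesis
      proof (cases "v \<in> Z")
        case True
        then show ?thesis using uN NZV unfolding x_def by auto
      next
        case False2: False
        have "v \<notin> NZ" using uN Z(3) a unfolding independent_def NZ_def by auto
        then have "v \<in> Rest" using vV False2 unfolding Rest_def by auto
        then have "1 \<le> x' z + x' v" using E'2 a uN by blast
        then show ?thesis using uN False False2 \<open>v \<notin> NZ\<close> NZV unfolding x_def by auto
      qed
    qed
  qed
  have feas: "lpvc_feasible V E x"
    unfolding lpvc_feasible_def
  proof (intro conjI allI impI ballI)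
    fix u v assume e: "{u, v} \<in> E"
    have e': "{v, u} \<in> E" using e by (simp add: insert_commute)
    have uv: "u \<in> V" "v \<in> V" using graph_edge[OF g e] by auto
    show "1 \<le> x u + x v"
    proof (cases "u \<in> Z \<or> u \<in> NZ")
      case True then show ?thesis using key e by blast
    next
      case False
      show ?thesis
      proof (cases "v \<in> Z \<or> v \<in> NZ")
        case True then have "1 \<le> x v + x u" using key e' by blast
        then show ?thesis by linarith
      next
        case False2: False
        then have "u \<in> Rest" "v \<in> Rest" using False uv unfolding Rest_def by auto
        then show ?thesis using E'1 e False False2 unfolding x_def by auto
      qed
    qed
  next
    fix v assume "v \<in> V"
    then show "0 \<le> x v" "x v \<le> 1" using x'z x'R unfolding x_def Rest_def by auto
  qed
  have Vsplit: "V = Z \<union> NZ \<union> Rest" using Z(1) NZV unfolding Rest_def by auto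
  have fZ: "finite Z" using Z(1) fV finite_subset by blast
  have fN: "finite NZ" using NZV fV finite_subset by blast
  have d1: "(Z \<union> NZ) \<inter> Rest = {}" unfolding Rest_def by blast
  have s1: "sum x (Z \<union> NZ \<union> Rest) = sum x (Z \<union> NZ) + sum x Rest"
    using fZ fN fR d1 by (intro sum.union_disjoint) auto
  have s2: "sum x (Z \<union> NZ) = sum x Z + sum x NZ"
    using fZ fN NZV(2) by (intro sum.union_disjoint) auto
  have xZ: "\<And>v. v \<in> Z \<Longrightarrow> x v = 1 - x' z" unfolding x_def by auto
  have sZ: "sum x Z = real (card Z) * (1 - x' z)" using sum.cong[OF refl xZ, of Z] by simp
  have xN: "\<And>v. v \<in> NZ \<Longrightarrow> x v = x' z" using NZV unfolding x_def by auto
  have sN: "sum x NZ = real (card NZ) * x' z" using sum.cong[OF refl xN, of NZ] by simp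
  have xR: "\<And>v. v \<in> Rest \<Longrightarrow> x v = x' v" unfolding x_def Rest_def by auto
  have sR: "sum x Rest = sum x' Rest" using sum.cong[OF refl xR, of Rest] by simp
  have cN: "real (card NZ) = real (card Z) + 1" using Z(4) unfolding NZ_def by simp
  have sV': "s = x' z + sum x' Rest" unfolding s V'eq using zR fR by simp
  have sV: "sum x V = sum x (Z \<union> NZ \<union> Rest)" by (rule arg_cong[OF Vsplit])
  have "sum x V = real (card Z) * (1 - x' z) + (real (card Z) + 1) * x' z + sum x' Rest"
    using sV s1 s2 sZ sN sR cN by simp
  then have "sum x V = real (card Z) + s" using sV' by (simp add: algebra_simps)
  moreover have "LP V E \<le> (\<Sum>v\<in>V. x v)" by (rule LP_lower[OF feas])
  ultimately show "real (card V) / 2 - real (card Z) \<le> s" using LP_half[OF h] by linarith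
qed


theorem lemma9:
  fixes V :: "'a set" and E :: "'a set set" and k :: nat and Z :: "'a set" and z :: 'a
  assumes "graph V E"
    and "half_unique_optimum V E"
    and "\<not> (\<exists>Y. Y \<subseteq> V \<and> independent E Y \<and> surplus V E Y = 1 \<and> \<not> independent E (nbh V E Y))"
    and "Z \<subseteq> V" and "independent E Z" and "surplus V E Z = 1" and "independent E (nbh V E Z)"
    and "z \<notin> V"
  shows "(real k - real (card Z)) + real (MM (rr3_edges V E Z z))
           - 2 * LP (rr3_vertices V E Z z) (rr3_edges V E Z z)
         \<le> real k + real (MM E) - 2 * LP V E"
proof -
  note g = assms(1) and h = assms(2) and ZV = assms(4) and Zi = assms(5) and sZ = assms(6)
    and NZi = assms(7) and z = assms(8)
  define NZ where "NZ = nbh V E Z"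
  define E' where "E' = rr3_edges V E Z z"
  have fV: "finite V" using g unfolding graph_def by auto
  have fE: "finite E" using graph_finE[OF g] .
  have EV: "\<And>e. e \<in> E \<Longrightarrow> e \<subseteq> V" using graph_EV[OF g] by blast
  have fZ: "finite Z" using ZV fV finite_subset by blast
  have NZV: "NZ \<subseteq> V" "Z \<inter> NZ = {}" unfolding NZ_def nbh_def by auto
  have fN: "finite NZ" using NZV fV finite_subset by blast
  have cN: "card NZ = card Z + 1" using sZ unfolding surplus_def NZ_def by simp
  have hallZ: "\<And>n0. \<exists>f. inj_on f Z \<and> (\<forall>a\<in>Z. f a \<in> NZ - {n0} \<and> {a, f a} \<in> E)"
  proof -
    fix n0
    define Nb where "Nb = (\<lambda>a. {v \<in> NZ - {n0}. {a, v} \<in> E})"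
    have "\<exists>f. inj_on f Z \<and> (\<forall>a\<in>Z. f a \<in> Nb a)"
    proof (rule hall)
      show "finite Z" by (rule fZ)
      show "\<forall>a\<in>Z. finite (Nb a)" using fN unfolding Nb_def by auto
      show "\<forall>S\<subseteq>Z. card S \<le> card (\<Union> (Nb ` S))"
      proof (intro allI impI)
        fix S assume S: "S \<subseteq> Z"
        show "card S \<le> card (\<Union> (Nb ` S))"
        proof (cases "S = {}")
          case True then show ?thesis by simp
        next
          case False
          have SV: "S \<subseteq> V" using S ZV by auto
          have Si: "independent E S" using Zi S unfolding independent_def by blast
          have lt: "card S < card (nbh V E S)" using surplus_pos[OF g h SV Si False] .
          have sub: "nbh V E S - {n0} \<subseteq> \<Union> (Nb ` S)"
          proof
            fix v assume v: "v \<in> nbh V E S - {n0}"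
            then obtain u where u: "u \<in> S" "{u, v} \<in> E" "v \<in> V" "v \<notin> S" unfolding nbh_def by auto
            have "v \<notin> Z" using u S Zi unfolding independent_def by blast
            then have "v \<in> NZ" using u S unfolding NZ_def nbh_def by auto
            then show "v \<in> \<Union> (Nb ` S)" using u v unfolding Nb_def by auto
          qed
          have "\<Union> (Nb ` S) \<subseteq> NZ" unfolding Nb_def by auto
          then have fU: "finite (\<Union> (Nb ` S))" using fN finite_subset by blast
          have fNS: "finite (nbh V E S)" using fV unfolding nbh_def by auto
          have "card (nbh V E S) \<le> card (nbh V E S - {n0}) + 1"
            using fNS by (cases "n0 \<in> nbh V E S") (auto simp: card_Diff_singleton)
          moreover have "card (nbh V E S - {n0}) \<le> card (\<Union> (Nb ` S))" using card_mono[OF fU sub] .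
          ultimately show ?thesis using lt by simp
        qed
      qed
    qed
    then show "\<exists>f. inj_on f Z \<and> (\<forall>a\<in>Z. f a \<in> NZ - {n0} \<and> {a, f a} \<in> E)"
      unfolding Nb_def by auto
  qed
  have fE': "finite E'"
  proof -
    have "E' \<subseteq> E \<union> (\<lambda>w. {z, w}) ` V"
    proof
      fix e assume "e \<in> E'"
      then have "e \<in> E \<or> (\<exists>w. e = {z, w} \<and> w \<in> nbh V E (nbh V E Z))"
        unfolding E'_def rr3_edges_def by blast
      moreover have "nbh V E (nbh V E Z) \<subseteq> V" unfolding nbh_def by blast
      ultimately show "e \<in> E \<union> (\<lambda>w. {z, w}) ` V" by blast
    qed
    then show ?thesis using fE fV by (meson finite_Un finite_imageI finite_subset)
  qed
  obtain M' where M': "matching E' M'" "card M' = MM E'" using MM_ex[OF fE'] by blast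
  have fM': "finite M'" using M'(1) fE' unfolding matching_def by (meson finite_subset)
  have Eform: "\<And>e. e \<in> E' \<Longrightarrow> z \<notin> e \<Longrightarrow> e \<in> E \<and> e \<inter> (Z \<union> NZ) = {}"
  proof -
    fix e assume "e \<in> E'" "z \<notin> e"
    then show "e \<in> E \<and> e \<inter> (Z \<union> NZ) = {}" unfolding E'_def rr3_edges_def NZ_def by blast
  qed
  have "\<exists>M0 n0. matching E M0 \<and> finite M0 \<and> card M0 = card M' \<and> (\<forall>e\<in>M0. e \<inter> (Z \<union> (NZ - {n0})) = {})"
  proof (cases "\<exists>e0\<in>M'. z \<in> e0")
    case False
    have "NZ \<noteq> {}" using cN by auto
    then obtain n0 where "n0 \<in> NZ" by blast
    have "\<forall>e\<in>M'. e \<in> E \<and> e \<inter> (Z \<union> NZ) = {}" using False Eform M'(1) unfolding matching_def by blast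
    then have "matching E M'" "\<forall>e\<in>M'. e \<inter> (Z \<union> (NZ - {n0})) = {}" using M'(1) unfolding matching_def by auto
    then show ?thesis using fM' by blast
  next
    case True
    then obtain e0 where e0: "e0 \<in> M'" "z \<in> e0" by blast
    have "e0 \<in> E'" using e0 M'(1) unfolding matching_def by auto
    moreover have "z \<notin> e" if "e \<in> E" for e using EV[OF that] z by auto
    ultimately have "\<exists>w. e0 = {z, w} \<and> w \<in> nbh V E NZ - Z"
      using e0 unfolding E'_def rr3_edges_def NZ_def by blast
    then obtain w where w: "e0 = {z, w}" "w \<in> nbh V E NZ - Z" by blast
    have "w \<in> V - NZ \<and> (\<exists>u\<in>NZ. {u, w} \<in> E)" using w(2) unfolding nbh_def by blast
    then obtain n0 where n0: "n0 \<in> NZ" "{n0, w} \<in> E" "w \<notin> NZ" "w \<notin> Z"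
      using w(2) by blast
    have oth: "\<forall>e\<in>M' - {e0}. e \<in> E \<and> e \<inter> (Z \<union> NZ) = {} \<and> w \<notin> e"
    proof
      fix e assume e: "e \<in> M' - {e0}"
      then have "e \<inter> e0 = {}" using e0 M'(1) unfolding matching_def by auto
      then have "z \<notin> e" "w \<notin> e" using w by auto
      moreover have "e \<in> E'" using e M'(1) unfolding matching_def by auto
      ultimately show "e \<in> E \<and> e \<inter> (Z \<union> NZ) = {} \<and> w \<notin> e" using Eform by blast
    qed
    define M0 where "M0 = insert {n0, w} (M' - {e0})"
    have nin: "{n0, w} \<notin> M' - {e0}" using oth n0 by blast
    have c1: "card (M' - {e0}) = card M' - 1" using e0 fM' by (simp add: card_Diff_singleton)
    have c2: "card M' > 0" using e0 fM' card_gt_0_iff by blast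
    have c3: "card M0 = Suc (card (M' - {e0}))" unfolding M0_def using nin fM' by simp
    have cM0: "card M0 = card M'" using c1 c2 c3 by simp
    have mM0: "matching E M0"
      unfolding matching_def M0_def
    proof (intro conjI ballI impI)
      show "insert {n0, w} (M' - {e0}) \<subseteq> E" using oth n0 by blast
    next
      fix e1 e2 assume a: "e1 \<in> insert {n0, w} (M' - {e0})" "e2 \<in> insert {n0, w} (M' - {e0})" "e1 \<noteq> e2"
      show "e1 \<inter> e2 = {}"
      proof (cases "e1 = {n0, w}")
        case True
        then have "e2 \<in> M' - {e0}" using a by auto
        then show ?thesis using True oth n0 by blast
      next
        case False
        then have e1: "e1 \<in> M' - {e0}" using a by auto
        show ?thesis
        proof (cases "e2 = {n0, w}")
          case True then show ?thesis using e1 oth n0 by blast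
        next
          case False
          then have "e2 \<in> M'" using a by auto
          then show ?thesis using e1 a(3) M'(1) unfolding matching_def by blast
        qed
      qed
    qed
    have "n0 \<notin> Z" using n0(1) NZV(2) by blast
    then have "{n0, w} \<inter> (Z \<union> (NZ - {n0})) = {}" using n0 by blast
    moreover have "\<forall>e\<in>M' - {e0}. e \<inter> (Z \<union> (NZ - {n0})) = {}" using oth by blast
    ultimately have "\<forall>e\<in>M0. e \<inter> (Z \<union> (NZ - {n0})) = {}" unfolding M0_def by blast
    moreover have "finite M0" unfolding M0_def using fM' by auto
    ultimately show ?thesis using mM0 cM0 by blast
  qed
  then obtain M0 n0 where M0: "matching E M0" "finite M0" "card M0 = card M'"
    "\<forall>e\<in>M0. e \<inter> (Z \<union> (NZ - {n0})) = {}" by blast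
  obtain f where f: "inj_on f Z" "\<forall>a\<in>Z. f a \<in> NZ - {n0} \<and> {a, f a} \<in> E" using hallZ by blast
  have ext: "matching E (M0 \<union> (\<lambda>a. {a, f a}) ` Z) \<and> card (M0 \<union> (\<lambda>a. {a, f a}) ` Z) = card M0 + card Z"
    using match_ext[OF M0(1,2,4) fZ NZV(2) f] .
  have MMb: "MM E' + card Z \<le> MM E" using MM_ge[OF fE, of "M0 \<union> (\<lambda>a. {a, f a}) ` Z"] ext M0(3) M'(2) by simp
  have LPb: "real (card V) / 2 - real (card Z) \<le> LP (rr3_vertices V E Z z) (rr3_edges V E Z z)"
    using LP'_lower[OF g h ZV Zi NZi _ z] cN unfolding NZ_def by simp
  have "real (MM E') + real (card Z) \<le> real (MM E)" using MMb by linarith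
  then show ?thesis using LPb LP_half[OF h] unfolding E'_def by linarith
qed

end
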